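(* Let $m\ge2$ and $\mathfrak p\ge1$ be integers, and let $\zeta$ act on $2\pi$-periodic paths by $\zeta x(\tau)=x(\tau-2\pi/(m\mathfrak p))$, generating an action of $\mathbb Z_{m\mathfrak p}$. (a) (Comet.) Let $\mathfrak q\ge1$ be an integer, $\omega=\mathfrak p/\mathfrak q$, $\nu=1/\mathfrak q$, $\varepsilon>0$, $x_j(\tau)=e^{-J\omega\tau/\nu}q_j(\tau/\nu)$, and $\mathcal H(x)=\int_0^{2\pi}\sum_{j=1}^n m_j[\phi_\alpha(\|x(\tau)-\varepsilon x_j(\tau)\|)-\phi_\alpha(\|x(\tau)\|)]d\tau$. If there is a permutation $\sigma$ of $\{1,\dots,n\}$ with $m_j=m_{\sigma(j)}$ and $q_j(t+2\pi\mathfrak q/(m\mathfrak p))=e^{2\pi J/m}q_{\sigma(j)}(t)$ for all $t$ and $j=1,\dots,n$, then $\mathcal H(\zeta x)=\mathcal H(x)$ for all $x$. (b) (Moon.) Let $m_1=1$, $q_j(t)=e^{tJ}a_j$ with $a_j=\sum_{k\ne j}m_k\frac{a_j-a_k}{\|a_j-a_k\|^{\alpha+1}}$, let $\omega>1$, $\nu=(\omega-1)/\mathfrak p$, $\varepsilon>0$, $x_j(\tau)=e^{-J\omega\tau/\nu}q_j(\tau/\nu)$, $y_j=x_1-x_j$, and $\mathcal H(x)=\int_0^{2\pi}h(x(\tau),\tau)d\tau$ with $h(x,\tau)=\varepsilon^{\alpha-1}\sum_{j=2}^n m_j[\phi_\alpha(\|y_j(\tau)+\varepsilon x\|)+\frac{y_j(\tau)}{\|y_j(\tau)\|^{\alpha+1}}\cdot\varepsilon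 x]$ for $\alpha>1$ and $h(x,\tau)=\sum_{j=2}^n m_j[-\log\frac{\|y_j(\tau)+\varepsilon x\|}{\|y_j(\tau)\|}+\frac{y_j(\tau)}{\|y_j(\tau)\|^2}\cdot\varepsilon x]$ for $\alpha=1$. If there is a permutation $\sigma$ of $\{1,\dots,n\}$ with $\sigma(1)=1$, $a_1=0$, and $m_j=m_{\sigma(j)}$, $a_j=e^{2\pi J/m}a_{\sigma(j)}$ for $j=2,\dots,n$, then $\mathcal H(\zeta x)=\mathcal H(x)$ for all $x$.
   Context: $n\ge2$, $\alpha\ge1$, masses $m_1,\dots,m_n>0$. In (a), $q_1,\dots,q_n$ is a collision-free $2\pi$-periodic solution of the $n$-body problem $\ddot q_j=-\sum_{k\ne j}m_k\frac{q_j-q_k}{\|q_j-q_k\|^{\alpha+1}}$ with $\sum_jm_jq_j=0$ and $\sum_jm_j=1$. $\phi_\alpha(\lambda)=\frac1{\alpha-1}\lambda^{1-\alpha}$ for $\alpha>1$, $\phi_1(\lambda)=-\log\lambda$. $J=\begin{pmatrix}0&1\\-1&0\end{pmatrix}$, $e^{J\theta}=\cos\theta\,I+\sin\theta\,J$. The paths $x$ range over $2\pi$-periodic $H^1$ paths for which the integrands are defined (no collisions). *)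

theory Defs
  imports "HOL-Analysis.Analysis"
begin

definition Jmat :: "real^2^2" where
  "Jmat = vector [vector [0, 1], vector [-1, 0]]"

definition expJ :: "real \<Rightarrow> real^2^2" where
  "expJ \<theta> = cos \<theta> *\<^sub>R mat 1 + sin \<theta> *\<^sub>R Jmat"

definition phi :: "real \<Rightarrow> real \<Rightarrow> real" where
  "phi \<alpha> r = (if \<alpha> = 1 then - ln r else (1 / (\<alpha> - 1)) * r powr (1 - \<alpha>))"

definition nbody_periodic_solution ::
  "nat \<Rightarrow> (nat \<Rightarrow> real) \<Rightarrow> real \<Rightarrow> (nat \<Rightarrow> real \<Rightarrow> real^2) \<Rightarrow> bool" where
  "nbody_periodic_solution n m \<alpha> q \<longleftrightarrow>
     (\<forall>j\<in>{1..n}. \<forall>t. q j (t + 2 * pi) = q j t) \<and>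
     (\<forall>j\<in>{1..n}. \<forall>k\<in>{1..n}. \<forall>t. j \<noteq> k \<longrightarrow> q j t \<noteq> q k t) \<and>
     (\<forall>j\<in>{1..n}. \<exists>v. \<forall>t. (q j has_vector_derivative v t) (at t) \<and>
        (v has_vector_derivative
           (- (\<Sum>k\<in>{1..n} - {j}. (m k / norm (q j t - q k t) powr (\<alpha> + 1)) *\<^sub>R (q j t - q k t))))
          (at t)) \<and>
     (\<forall>t. (\<Sum>j=1..n. m j *\<^sub>R q j t) = 0) \<and>
     (\<Sum>j=1..n. m j) = 1"

definition zeta :: "nat \<Rightarrow> nat \<Rightarrow> (real \<Rightarrow> real^2) \<Rightarrow> (real \<Rightarrow> real^2)" where
  "zeta mm pp x = (\<lambda>\<tau>. x (\<tau> - 2 * pi / (real mm * real pp)))"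

text \<open>2pi-periodic H^1 paths: periodic, and absolutely continuous on [0,2pi]
  with a square integrable derivative g.\<close>
definition H1_periodic :: "(real \<Rightarrow> real^2) \<Rightarrow> bool" where
  "H1_periodic x \<longleftrightarrow> (\<forall>t. x (t + 2 * pi) = x t) \<and>
     (\<exists>g. g absolutely_integrable_on {0..2*pi} \<and>
          (\<lambda>t. norm (g t) ^ 2) integrable_on {0..2*pi} \<and>
          (\<forall>t\<in>{0..2*pi}. (g has_integral (x t - x 0)) {0..t}))"

definition H_comet ::
  "nat \<Rightarrow> (nat \<Rightarrow> real) \<Rightarrow> real \<Rightarrow> real \<Rightarrow> (nat \<Rightarrow> real \<Rightarrow> real^2) \<Rightarrow> (real \<Rightarrow> real^2) \<Rightarrow> real" where
  "H_comet n m \<alpha> \<epsilon> xs x =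
     integral {0..2*pi} (\<lambda>\<tau>. \<Sum>j=1..n. m j * (phi \<alpha> (norm (x \<tau> - \<epsilon> *\<^sub>R xs j \<tau>)) - phi \<alpha> (norm (x \<tau>))))"

text \<open>Moon integrand h (b), y_j = x_1 - x_j passed as ys.\<close>
definition h_moon ::
  "nat \<Rightarrow> (nat \<Rightarrow> real) \<Rightarrow> real \<Rightarrow> real \<Rightarrow> (nat \<Rightarrow> real \<Rightarrow> real^2) \<Rightarrow> real^2 \<Rightarrow> real \<Rightarrow> real" where
  "h_moon n m \<alpha> \<epsilon> ys x \<tau> =
     (if \<alpha> > 1 then
        \<epsilon> powr (\<alpha> - 1) * (\<Sum>j=2..n. m j * (phi \<alpha> (norm (ys j \<tau> + \<epsilon> *\<^sub>R x))
            + ((1 / norm (ys j \<tau>) powr (\<alpha> + 1)) *\<^sub>R ys j \<tau>) \<bullet> (\<epsilon> *\<^sub>R x)))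
      else
        (\<Sum>j=2..n. m j * (- ln (norm (ys j \<tau> + \<epsilon> *\<^sub>R x) / norm (ys j \<tau>))
            + ((1 / norm (ys j \<tau>) ^ 2) *\<^sub>R ys j \<tau>) \<bullet> (\<epsilon> *\<^sub>R x))))"

definition H_moon ::
  "nat \<Rightarrow> (nat \<Rightarrow> real) \<Rightarrow> real \<Rightarrow> real \<Rightarrow> (nat \<Rightarrow> real \<Rightarrow> real^2) \<Rightarrow> (real \<Rightarrow> real^2) \<Rightarrow> real" where
  "H_moon n m \<alpha> \<epsilon> ys x = integral {0..2*pi} (\<lambda>\<tau>. h_moon n m \<alpha> \<epsilon> ys (x \<tau>) \<tau>)"

end

theory Submission
  imports Defs
begin


lemma expJ_mv1: "(expJ t *v v) $ 1 = cos t * v$1 + sin t * v$2"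
  by (simp add: expJ_def Jmat_def matrix_vector_mult_def sum_2 mat_def)

lemma expJ_mv2: "(expJ t *v v) $ 2 = - sin t * v$1 + cos t * v$2"
  by (simp add: expJ_def Jmat_def matrix_vector_mult_def sum_2 mat_def)

lemma expJ_comp: "expJ a *v (expJ b *v v) = expJ (a + b) *v v"
  by (simp add: vec_eq_iff forall_2 expJ_mv1 expJ_mv2 cos_add sin_add algebra_simps)

lemma mv_neg: "(A :: real^2^2) *v (- v) = - (A *v v)"
  by (simp add: vec_eq_iff matrix_vector_mult_def sum_negf)

lemma iter_periodic:
  fixes f :: "real \<Rightarrow> 'a"
  assumes "\<forall>t. f (t + p) = f t"
  shows "f (t + real k * p) = f t"
proof (induction k)
  case 0 then show ?case by simp
next
  case (Suc k)
  have "f (t + real (Suc k) * p) = f ((t + real k * p) + p)" by (simp add: algebra_simps)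
  also have "\<dots> = f (t + real k * p)" using assms by simp
  finally show ?case using Suc by simp
qed

lemma expJ_periodic: "expJ (t + 2 * pi * real k) = expJ t"
proof -
  have "sin (t + real k * (2*pi)) = sin t" by (rule iter_periodic) simp
  moreover have "cos (t + real k * (2*pi)) = cos t" by (rule iter_periodic) simp
  ultimately show ?thesis unfolding expJ_def by (simp add: mult.commute mult.left_commute)
qed

lemma expJ_periodic_minus: "expJ (t - 2 * pi * real k) = expJ t"
  using expJ_periodic[of "t - 2 * pi * real k" k] by simp

lemma periodic_shift_has_integral:
  fixes f :: "real \<Rightarrow> real" and p s I :: real
  assumes per: "\<forall>t. f (t + p) = f t" and s0: "0 \<le> s" and sp: "s \<le> p"
    and I: "(f has_integral I) {0..p}"
  shows "((\<lambda>t. f (t - s)) has_integral I) {0..p}"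
proof -
  have fi: "f integrable_on {0..p}" using I by blast
  have i1: "f integrable_on {0..p-s}" by (rule integrable_subinterval_real[OF fi]) (use s0 in auto)
  have i2: "f integrable_on {p-s..p}" by (rule integrable_subinterval_real[OF fi]) (use sp in auto)
  have Ieq0: "(f has_integral (integral {0..p-s} f + integral {p-s..p} f)) {0..p}"
    by (rule has_integral_combine) (use s0 sp integrable_integral[OF i1] integrable_integral[OF i2] in auto)
  have Ieq: "I = integral {0..p-s} f + integral {p-s..p} f"
    using has_integral_unique[OF I Ieq0] .
  have h2: "((\<lambda>x. f (x + (p - s))) has_integral integral {p-s..p} f) {p-s-(p-s)..p-(p-s)}"
    by (rule has_integral_shift_real_ivl) (use i2 in auto)
  have h2': "((\<lambda>t. f (t - s)) has_integral integral {p-s..p} f) {0..s}"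
  proof -
    have "\<And>x. f (x + (p - s)) = f (x - s)" proof -
      fix x
      have "x + (p - s) = (x - s) + p" by simp
      then show "f (x + (p - s)) = f (x - s)" using per by metis
    qed
    then show ?thesis using h2 by simp
  qed
  have h1: "((\<lambda>x. f (x + (- s))) has_integral integral {0..p-s} f) {0-(-s)..p-s-(-s)}"
    by (rule has_integral_shift_real_ivl) (use i1 in auto)
  have h1': "((\<lambda>t. f (t - s)) has_integral integral {0..p-s} f) {s..p}"
    using h1 by simp
  show ?thesis
    using has_integral_combine[OF s0 sp h2' h1'] Ieq by (simp add: add.commute)
qed

lemma periodic_shift_integral:
  fixes f :: "real \<Rightarrow> real" and p s I :: real
  assumes per: "\<forall>t. f (t + p) = f t" and s0: "0 \<le> s" and sp: "s \<le> p"
  shows "integral {0..p} (\<lambda>t. f (t - s)) = integral {0..p} f"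
proof (cases "f integrable_on {0..p}")
  case True
  then show ?thesis using periodic_shift_has_integral[OF per s0 sp] integral_unique
    by (metis has_integral_integral)
next
  case False
  have "\<not> (\<lambda>t. f (t - s)) integrable_on {0..p}"
  proof
    assume "(\<lambda>t. f (t - s)) integrable_on {0..p}"
    then obtain J where J: "((\<lambda>t. f (t - s)) has_integral J) {0..p}" by blast
    have per2: "\<forall>t. (\<lambda>t. f (t - s)) (t + p) = (\<lambda>t. f (t - s)) t"
    proof
      fix t
      have "t + p - s = (t - s) + p" by simp
      then show "(\<lambda>t. f (t - s)) (t + p) = (\<lambda>t. f (t - s)) t" using per by (metis add_diff_eq)
    qed
    have "((\<lambda>t. (\<lambda>t. f (t - s)) (t - (p - s))) has_integral J) {0..p}"
      by (rule periodic_shift_has_integral[OF per2 _ _ J]) (use s0 sp in auto)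
    moreover have "\<And>t. (\<lambda>t. f (t - s)) (t - (p - s)) = f t"
    proof -
      fix t
      have "t - (p - s) - s = t - p" by simp
      moreover have "f ((t - p) + p) = f (t - p)" using per by blast
      ultimately show "(\<lambda>t. f (t - s)) (t - (p - s)) = f t" by simp
    qed
    ultimately have "(f has_integral J) {0..p}" by simp
    then show False using False by blast
  qed
  then show ?thesis using False by (simp add: not_integrable_integral)
qed

lemma sum_perm_lemma:
  assumes "\<sigma> permutes S" and "\<forall>j\<in>S. m j = m (\<sigma> j) \<and> Y j = Z (\<sigma> j)"
  shows "(\<Sum>j\<in>S. (m j :: real) * G (Y j)) = (\<Sum>j\<in>S. m j * G (Z j))"
proof -
  have "(\<Sum>j\<in>S. m j * G (Y j)) = (\<Sum>j\<in>S. ((\<lambda>k. m k * G (Z k)) \<circ> \<sigma>) j)"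
    using assms(2) by (intro sum.cong) auto
  also have "\<dots> = (\<Sum>j\<in>S. m j * G (Z j))"
    using sum.permute[OF assms(1), of "\<lambda>k. m k * G (Z k)"] by simp
  finally show ?thesis .
qed


lemma partA:
  fixes q :: "nat \<Rightarrow> real \<Rightarrow> real^2" and xs :: "nat \<Rightarrow> real \<Rightarrow> real^2"
    and m :: "nat \<Rightarrow> real" and x :: "real \<Rightarrow> real^2"
  assumes mm: "mm \<ge> 2" and pp: "pp \<ge> 1" and nb: "nbody_periodic_solution n m \<alpha> q"
    and qq: "qq \<ge> 1" and sig: "\<sigma> permutes {1..n}"
    and hs: "\<forall>j\<in>{1..n}. m j = m (\<sigma> j) \<and>
           (\<forall>t. q j (t + 2 * pi * real qq / (real mm * real pp)) = expJ (2 * pi / real mm) *v q (\<sigma> j) t)"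
    and xs_def: "\<forall>j \<tau>. xs j \<tau> = expJ (- (real pp / real qq * \<tau> / (1 / real qq))) *v q j (\<tau> / (1 / real qq))"
    and H1: "H1_periodic x"
  shows "H_comet n m \<alpha> \<epsilon> xs (zeta mm pp x) = H_comet n m \<alpha> \<epsilon> xs x"
proof -
  define s where "s = 2 * pi / (real mm * real pp)"
  have mmp: "real mm * real pp \<ge> 1"
  proof -
    have "real mm \<ge> 1" "real pp \<ge> 1" using mm pp by auto
    then have "1 * 1 \<le> real mm * real pp" by (intro mult_mono) auto
    then show ?thesis by simp
  qed
  have s0: "0 \<le> s" unfolding s_def by simp
  have s2: "s \<le> 2 * pi" unfolding s_def using mmp
    by (simp add: divide_le_eq pi_gt_zero mult_le_cancel_left1 less_le_trans[OF zero_less_one])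
  have qq0: "real qq \<noteq> 0" "real pp \<noteq> 0" "real mm \<noteq> 0" using qq pp mm by auto
  have xs_simp: "\<And>j \<tau>. xs j \<tau> = expJ (- (real pp * \<tau>)) *v q j (real qq * \<tau>)"
    using xs_def qq0 by (simp add: field_simps)
  have qper: "\<forall>j\<in>{1..n}. \<forall>t. q j (t + 2 * pi) = q j t"
    using nb unfolding nbody_periodic_solution_def by blast
  have xs_per: "xs j (u + 2 * pi) = xs j u" if "j \<in> {1..n}" for j u
  proof -
    have e1: "- (real pp * (u + 2 * pi)) = - (real pp * u) - 2 * pi * real pp" by (simp add: algebra_simps)
    have e2: "real qq * (u + 2 * pi) = real qq * u + real qq * (2 * pi)" by (simp add: algebra_simps)
    have "q j (real qq * u + real qq * (2 * pi)) = q j (real qq * u)"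
      by (rule iter_periodic) (use qper that in auto)
    then show ?thesis unfolding xs_simp e1 e2 expJ_periodic_minus by simp
  qed
  have xs_shift: "xs j (u + s) = xs (\<sigma> j) u" if "j \<in> {1..n}" for j u
  proof -
    have e1: "- (real pp * (u + s)) = - (real pp * u) - 2 * pi / real mm"
      unfolding s_def using qq0 by (simp add: field_simps)
    have e2: "real qq * (u + s) = real qq * u + 2 * pi * real qq / (real mm * real pp)"
      unfolding s_def using qq0 by (simp add: field_simps)
    have "xs j (u + s) = expJ (- (real pp * u) - 2 * pi / real mm) *v
        (expJ (2 * pi / real mm) *v q (\<sigma> j) (real qq * u))"
      unfolding xs_simp e1 e2 using hs that by simp
    also have "\<dots> = xs (\<sigma> j) u" unfolding expJ_comp xs_simp by simp
    finally show ?thesis .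
  qed
  have xper: "\<forall>t. x (t + 2 * pi) = x t" using H1 unfolding H1_periodic_def by blast
  define F where "F u = (\<Sum>j=1..n. m j * (phi \<alpha> (norm (x u - \<epsilon> *\<^sub>R xs j u)) - phi \<alpha> (norm (x u))))" for u
  have Fper: "\<forall>t. F (t + 2 * pi) = F t"
    unfolding F_def using xper xs_per by simp
  have integrand: "(\<Sum>j=1..n. m j * (phi \<alpha> (norm (zeta mm pp x \<tau> - \<epsilon> *\<^sub>R xs j \<tau>)) - phi \<alpha> (norm (zeta mm pp x \<tau>))))
      = F (\<tau> - s)" for \<tau>
  proof -
    have z: "zeta mm pp x \<tau> = x (\<tau> - s)" unfolding zeta_def s_def by simp
    have "\<forall>j\<in>{1..n}. m j = m (\<sigma> j) \<and> xs j \<tau> = xs (\<sigma> j) (\<tau> - s)"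
      using hs xs_shift[of _ "\<tau> - s"] by simp
    from sum_perm_lemma[OF sig this, of "\<lambda>y. phi \<alpha> (norm (x (\<tau> - s) - \<epsilon> *\<^sub>R y)) - phi \<alpha> (norm (x (\<tau> - s)))"]
    show ?thesis unfolding z F_def by simp
  qed
  have "H_comet n m \<alpha> \<epsilon> xs (zeta mm pp x) = integral {0..2*pi} (\<lambda>\<tau>. F (\<tau> - s))"
    unfolding H_comet_def integrand by simp
  also have "\<dots> = integral {0..2*pi} F" by (rule periodic_shift_integral[OF Fper s0 s2])
  also have "\<dots> = H_comet n m \<alpha> \<epsilon> xs x" unfolding H_comet_def F_def by simp
  finally show ?thesis .
qed


lemma partB:
  fixes a :: "nat \<Rightarrow> real^2" and xs ys :: "nat \<Rightarrow> real \<Rightarrow> real^2"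
    and m :: "nat \<Rightarrow> real" and x :: "real \<Rightarrow> real^2" and \<omega> :: real
  assumes mm: "mm \<ge> 2" and pp: "pp \<ge> 1" and om: "\<omega> > 1"
    and sig: "\<sigma> permutes {1..n}" and s1: "\<sigma> 1 = 1" and a1: "a 1 = 0"
    and hs: "\<forall>j\<in>{2..n}. m j = m (\<sigma> j) \<and> a j = expJ (2 * pi / real mm) *v a (\<sigma> j)"
    and xs_def: "\<forall>j \<tau>. xs j \<tau> = expJ (- (\<omega> * \<tau> / ((\<omega> - 1) / real pp))) *v (expJ (\<tau> / ((\<omega> - 1) / real pp)) *v a j)"
    and ys_def: "\<forall>j \<tau>. ys j \<tau> = xs 1 \<tau> - xs j \<tau>"
    and H1: "H1_periodic x"
  shows "H_moon n m \<alpha> \<epsilon> ys (zeta mm pp x) = H_moon n m \<alpha> \<epsilon> ys x"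
proof -
  define s where "s = 2 * pi / (real mm * real pp)"
  have mmp: "real mm * real pp \<ge> 1"
  proof -
    have "real mm \<ge> 1" "real pp \<ge> 1" using mm pp by auto
    then have "1 * 1 \<le> real mm * real pp" by (intro mult_mono) auto
    then show ?thesis by simp
  qed
  have s0: "0 \<le> s" unfolding s_def by simp
  have s2: "s \<le> 2 * pi" unfolding s_def using mmp
    by (simp add: divide_le_eq pi_gt_zero mult_le_cancel_left1 less_le_trans[OF zero_less_one])
  have qq0: "real pp \<noteq> 0" "real mm \<noteq> 0" "\<omega> - 1 \<noteq> 0" using om pp mm by auto
  have xs_simp: "xs j \<tau> = expJ (- (real pp * \<tau>)) *v a j" for j \<tau>
  proof -
    have "- (\<omega> * \<tau> / ((\<omega> - 1) / real pp)) + \<tau> / ((\<omega> - 1) / real pp)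
        = - (((\<omega> - 1) * \<tau>) / ((\<omega> - 1) / real pp))"
      by (simp add: left_diff_distrib diff_divide_distrib)
    also have "\<dots> = - (real pp * \<tau>)" using qq0 by (simp add: field_simps)
    finally have "- (\<omega> * \<tau> / ((\<omega> - 1) / real pp)) + \<tau> / ((\<omega> - 1) / real pp) = - (real pp * \<tau>)" .
    then show ?thesis using xs_def expJ_comp by metis
  qed
  define b where "b j = a 1 - a j" for j
  have ys_simp: "ys j \<tau> = expJ (- (real pp * \<tau>)) *v b j" for j \<tau>
    unfolding ys_def[rule_format] xs_simp b_def by (simp add: matrix_vector_mult_diff_distrib)
  have bs: "b j = expJ (2 * pi / real mm) *v b (\<sigma> j)" if "j \<in> {2..n}" for j
    using hs that a1 unfolding b_def by (simp add: matrix_vector_mult_diff_distrib mv_neg)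
  have ys_per: "ys j (u + 2 * pi) = ys j u" for j u
  proof -
    have e1: "- (real pp * (u + 2 * pi)) = - (real pp * u) - 2 * pi * real pp" by (simp add: algebra_simps)
    show ?thesis unfolding ys_simp e1 expJ_periodic_minus ..
  qed
  have ys_shift: "ys j (u + s) = ys (\<sigma> j) u" if "j \<in> {2..n}" for j u
  proof -
    have e1: "- (real pp * (u + s)) = - (real pp * u) - 2 * pi / real mm"
      unfolding s_def using qq0 by (simp add: field_simps)
    have "ys j (u + s) = expJ (- (real pp * u) - 2 * pi / real mm) *v
        (expJ (2 * pi / real mm) *v b (\<sigma> j))"
      unfolding ys_simp e1 using bs[OF that] by simp
    also have "\<dots> = ys (\<sigma> j) u" unfolding expJ_comp ys_simp by simp
    finally show ?thesis .
  qed
  have sig2: "\<sigma> permutes {2..n}"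
  proof -
    have A: "\<forall>x. x \<notin> {1..n} \<longrightarrow> \<sigma> x = x" and B: "\<forall>y. \<exists>!x. \<sigma> x = y"
      using sig unfolding permutes_def by blast+
    have "\<sigma> x = x" if "x \<notin> {2..n}" for x
    proof (cases "x = 1")
      case True then show ?thesis using s1 by simp
    next
      case False
      then have "x \<notin> {1..n}" using that by auto
      then show ?thesis using A by blast
    qed
    then show ?thesis unfolding permutes_def using B by blast
  qed
  have h_shift: "h_moon n m \<alpha> \<epsilon> ys v (u + s) = h_moon n m \<alpha> \<epsilon> ys v u" for v u
  proof -
    have P: "\<forall>j\<in>{2..n}. m j = m (\<sigma> j) \<and> ys j (u + s) = ys (\<sigma> j) u"
      using hs ys_shift by simp
    have e1: "(\<Sum>j=2..n. m j * (phi \<alpha> (norm (ys j (u + s) + \<epsilon> *\<^sub>R v))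
            + ((1 / norm (ys j (u + s)) powr (\<alpha> + 1)) *\<^sub>R ys j (u + s)) \<bullet> (\<epsilon> *\<^sub>R v)))
       = (\<Sum>j=2..n. m j * (phi \<alpha> (norm (ys j u + \<epsilon> *\<^sub>R v))
            + ((1 / norm (ys j u) powr (\<alpha> + 1)) *\<^sub>R ys j u) \<bullet> (\<epsilon> *\<^sub>R v)))"
      using sum_perm_lemma[OF sig2 P, of "\<lambda>y. phi \<alpha> (norm (y + \<epsilon> *\<^sub>R v))
            + ((1 / norm y powr (\<alpha> + 1)) *\<^sub>R y) \<bullet> (\<epsilon> *\<^sub>R v)"] by simp
    have e2: "(\<Sum>j=2..n. m j * (- ln (norm (ys j (u + s) + \<epsilon> *\<^sub>R v) / norm (ys j (u + s)))
            + ((1 / norm (ys j (u + s)) ^ 2) *\<^sub>R ys j (u + s)) \<bullet> (\<epsilon> *\<^sub>R v)))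
       = (\<Sum>j=2..n. m j * (- ln (norm (ys j u + \<epsilon> *\<^sub>R v) / norm (ys j u))
            + ((1 / norm (ys j u) ^ 2) *\<^sub>R ys j u) \<bullet> (\<epsilon> *\<^sub>R v)))"
      using sum_perm_lemma[OF sig2 P, of "\<lambda>y. - ln (norm (y + \<epsilon> *\<^sub>R v) / norm y)
            + ((1 / norm y ^ 2) *\<^sub>R y) \<bullet> (\<epsilon> *\<^sub>R v)"] by simp
    show ?thesis unfolding h_moon_def e1 e2 ..
  qed
  have h_per: "h_moon n m \<alpha> \<epsilon> ys v (u + 2 * pi) = h_moon n m \<alpha> \<epsilon> ys v u" for v u
    unfolding h_moon_def ys_per ..
  have xper: "\<forall>t. x (t + 2 * pi) = x t" using H1 unfolding H1_periodic_def by blast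
  define F where "F u = h_moon n m \<alpha> \<epsilon> ys (x u) u" for u
  have Fper: "\<forall>t. F (t + 2 * pi) = F t"
    unfolding F_def using xper h_per by simp
  have integrand: "h_moon n m \<alpha> \<epsilon> ys (zeta mm pp x \<tau>) \<tau> = F (\<tau> - s)" for \<tau>
  proof -
    have z: "zeta mm pp x \<tau> = x (\<tau> - s)" unfolding zeta_def s_def by simp
    show ?thesis unfolding z F_def using h_shift[of "x (\<tau> - s)" "\<tau> - s"] by simp
  qed
  have "H_moon n m \<alpha> \<epsilon> ys (zeta mm pp x) = integral {0..2*pi} (\<lambda>\<tau>. F (\<tau> - s))"
    unfolding H_moon_def integrand by simp
  also have "\<dots> = integral {0..2*pi} F" by (rule periodic_shift_integral[OF Fper s0 s2])
  also have "\<dots> = H_moon n m \<alpha> \<epsilon> ys x" unfolding H_moon_def F_def by simp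
  finally show ?thesis .
qed

theorem lemma2:
  fixes n mm pp :: nat and \<alpha> :: real and m :: "nat \<Rightarrow> real"
  assumes "n \<ge> 2" and "\<alpha> \<ge> 1" and "\<forall>j\<in>{1..n}. m j > 0"
    and "mm \<ge> 2" and "pp \<ge> 1"
  shows
    "(\<forall>(q :: nat \<Rightarrow> real \<Rightarrow> real^2) (qq :: nat) (\<epsilon> :: real) (\<sigma> :: nat \<Rightarrow> nat).
        nbody_periodic_solution n m \<alpha> q \<and> qq \<ge> 1 \<and> \<epsilon> > 0 \<and>
        \<sigma> permutes {1..n} \<and>
        (\<forall>j\<in>{1..n}. m j = m (\<sigma> j) \<and>
           (\<forall>t. q j (t + 2 * pi * real qq / (real mm * real pp)) = expJ (2 * pi / real mm) *v q (\<sigma> j) t))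
        \<longrightarrow>
        (let \<omega> = real pp / real qq; \<nu> = 1 / real qq;
             xs = (\<lambda>j \<tau>. expJ (- (\<omega> * \<tau> / \<nu>)) *v q j (\<tau> / \<nu>))
         in \<forall>x. H1_periodic x \<and> (\<forall>\<tau>. x \<tau> \<noteq> 0 \<and> (\<forall>j\<in>{1..n}. x \<tau> \<noteq> \<epsilon> *\<^sub>R xs j \<tau>)) \<longrightarrow>
              H_comet n m \<alpha> \<epsilon> xs (zeta mm pp x) = H_comet n m \<alpha> \<epsilon> xs x)) \<and>
     (\<forall>(a :: nat \<Rightarrow> real^2) (\<omega> :: real) (\<epsilon> :: real) (\<sigma> :: nat \<Rightarrow> nat).
        m 1 = 1 \<and>
        (\<forall>j\<in>{1..n}. \<forall>k\<in>{1..n}. j \<noteq> k \<longrightarrow> a j \<noteq> a k) \<and>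
        (\<forall>j\<in>{1..n}. a j = (\<Sum>k\<in>{1..n} - {j}. (m k / norm (a j - a k) powr (\<alpha> + 1)) *\<^sub>R (a j - a k))) \<and>
        \<omega> > 1 \<and> \<epsilon> > 0 \<and>
        \<sigma> permutes {1..n} \<and> \<sigma> 1 = 1 \<and> a 1 = 0 \<and>
        (\<forall>j\<in>{2..n}. m j = m (\<sigma> j) \<and> a j = expJ (2 * pi / real mm) *v a (\<sigma> j))
        \<longrightarrow>
        (let q = (\<lambda>j t. expJ t *v a j); \<nu> = (\<omega> - 1) / real pp;
             xs = (\<lambda>j \<tau>. expJ (- (\<omega> * \<tau> / \<nu>)) *v q j (\<tau> / \<nu>));
             ys = (\<lambda>j \<tau>. xs 1 \<tau> - xs j \<tau>)
         in \<forall>x. H1_periodic x \<and> (\<forall>\<tau>. \<forall>j\<in>{2..n}. ys j \<tau> + \<epsilon> *\<^sub>R x \<tau> \<noteq> 0) \<longrightarrow>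
              H_moon n m \<alpha> \<epsilon> ys (zeta mm pp x) = H_moon n m \<alpha> \<epsilon> ys x))"
proof (intro conjI allI impI)
  fix q :: "nat \<Rightarrow> real \<Rightarrow> real^2" and qq :: nat and \<epsilon> :: real and \<sigma> :: "nat \<Rightarrow> nat"
  assume h: "nbody_periodic_solution n m \<alpha> q \<and> qq \<ge> 1 \<and> \<epsilon> > 0 \<and>
        \<sigma> permutes {1..n} \<and>
        (\<forall>j\<in>{1..n}. m j = m (\<sigma> j) \<and>
           (\<forall>t. q j (t + 2 * pi * real qq / (real mm * real pp)) = expJ (2 * pi / real mm) *v q (\<sigma> j) t))"
  show "let \<omega> = real pp / real qq; \<nu> = 1 / real qq;
             xs = (\<lambda>j \<tau>. expJ (- (\<omega> * \<tau> / \<nu>)) *v q j (\<tau> / \<nu>))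
         in \<forall>x. H1_periodic x \<and> (\<forall>\<tau>. x \<tau> \<noteq> 0 \<and> (\<forall>j\<in>{1..n}. x \<tau> \<noteq> \<epsilon> *\<^sub>R xs j \<tau>)) \<longrightarrow>
              H_comet n m \<alpha> \<epsilon> xs (zeta mm pp x) = H_comet n m \<alpha> \<epsilon> xs x"
    unfolding Let_def
  proof (intro allI impI)
    fix x :: "real \<Rightarrow> real^2"
    assume hx: "H1_periodic x \<and> (\<forall>\<tau>. x \<tau> \<noteq> 0 \<and> (\<forall>j\<in>{1..n}. x \<tau> \<noteq> \<epsilon> *\<^sub>R (expJ (- (real pp / real qq * \<tau> / (1 / real qq))) *v q j (\<tau> / (1 / real qq)))))"
    note nb = h[THEN conjunct1] and qq = h[THEN conjunct2, THEN conjunct1] and sg = h[THEN conjunct2, THEN conjunct2, THEN conjunct2, THEN conjunct1] and hs = h[THEN conjunct2, THEN conjunct2, THEN conjunct2, THEN conjunct2]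
    note H1 = hx[THEN conjunct1]
    show "H_comet n m \<alpha> \<epsilon> (\<lambda>j \<tau>. expJ (- (real pp / real qq * \<tau> / (1 / real qq))) *v q j (\<tau> / (1 / real qq))) (zeta mm pp x) =
          H_comet n m \<alpha> \<epsilon> (\<lambda>j \<tau>. expJ (- (real pp / real qq * \<tau> / (1 / real qq))) *v q j (\<tau> / (1 / real qq))) x"
      by (rule partA[OF assms(4) assms(5) nb qq sg hs _ H1]) (rule allI, rule allI, rule refl)
  qed
next
  fix a :: "nat \<Rightarrow> real^2" and \<omega> :: real and \<epsilon> :: real and \<sigma> :: "nat \<Rightarrow> nat"
  assume h: "m 1 = 1 \<and>
        (\<forall>j\<in>{1..n}. \<forall>k\<in>{1..n}. j \<noteq> k \<longrightarrow> a j \<noteq> a k) \<and>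
        (\<forall>j\<in>{1..n}. a j = (\<Sum>k\<in>{1..n} - {j}. (m k / norm (a j - a k) powr (\<alpha> + 1)) *\<^sub>R (a j - a k))) \<and>
        \<omega> > 1 \<and> \<epsilon> > 0 \<and>
        \<sigma> permutes {1..n} \<and> \<sigma> 1 = 1 \<and> a 1 = 0 \<and>
        (\<forall>j\<in>{2..n}. m j = m (\<sigma> j) \<and> a j = expJ (2 * pi / real mm) *v a (\<sigma> j))"
  show "let q = (\<lambda>j t. expJ t *v a j); \<nu> = (\<omega> - 1) / real pp;
             xs = (\<lambda>j \<tau>. expJ (- (\<omega> * \<tau> / \<nu>)) *v q j (\<tau> / \<nu>));
             ys = (\<lambda>j \<tau>. xs 1 \<tau> - xs j \<tau>)
         in \<forall>x. H1_periodic x \<and> (\<forall>\<tau>. \<forall>j\<in>{2..n}. ys j \<tau> + \<epsilon> *\<^sub>R x \<tau> \<noteq> 0) \<longrightarrow>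
              H_moon n m \<alpha> \<epsilon> ys (zeta mm pp x) = H_moon n m \<alpha> \<epsilon> ys x"
    unfolding Let_def
  proof (intro allI impI)
    fix x :: "real \<Rightarrow> real^2"
    assume hx: "H1_periodic x \<and> (\<forall>\<tau>. \<forall>j\<in>{2..n}. (\<lambda>j \<tau>. expJ (- (\<omega> * \<tau> / ((\<omega> - 1) / real pp))) *v (expJ (\<tau> / ((\<omega> - 1) / real pp)) *v a 1)
             - expJ (- (\<omega> * \<tau> / ((\<omega> - 1) / real pp))) *v (expJ (\<tau> / ((\<omega> - 1) / real pp)) *v a j)) j \<tau> + \<epsilon> *\<^sub>R x \<tau> \<noteq> 0)"
    note om = h[THEN conjunct2, THEN conjunct2, THEN conjunct2, THEN conjunct1] and sg = h[THEN conjunct2, THEN conjunct2, THEN conjunct2, THEN conjunct2, THEN conjunct2, THEN conjunct1] and s1 = h[THEN conjunct2, THEN conjunct2, THEN conjunct2, THEN conjunct2, THEN conjunct2, THEN conjunct2, THEN conjunct1] and a1 = h[THEN conjunct2, THEN conjunct2, THEN conjunct2, THEN conjunct2, THEN conjunct2, THEN conjunct2, THEN conjunct2, THEN conjunct1] and hs = h[THEN conjunct2, THEN conjunct2, THEN conjunct2, THEN conjunct2, THEN conjunct2, THEN conjunct2, THEN conjunct2, THEN conjunct2]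
    note H1 = hx[THEN conjunct1]
    show "H_moon n m \<alpha> \<epsilon> (\<lambda>j \<tau>. expJ (- (\<omega> * \<tau> / ((\<omega> - 1) / real pp))) *v (expJ (\<tau> / ((\<omega> - 1) / real pp)) *v a 1)
             - expJ (- (\<omega> * \<tau> / ((\<omega> - 1) / real pp))) *v (expJ (\<tau> / ((\<omega> - 1) / real pp)) *v a j)) (zeta mm pp x) = H_moon n m \<alpha> \<epsilon> (\<lambda>j \<tau>. expJ (- (\<omega> * \<tau> / ((\<omega> - 1) / real pp))) *v (expJ (\<tau> / ((\<omega> - 1) / real pp)) *v a 1)
             - expJ (- (\<omega> * \<tau> / ((\<omega> - 1) / real pp))) *v (expJ (\<tau> / ((\<omega> - 1) / real pp)) *v a j)) x"
      by (rule partB[OF assms(4) assms(5) om sg s1 a1 hs _ _ H1,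
            where xs = "\<lambda>j \<tau>. expJ (- (\<omega> * \<tau> / ((\<omega> - 1) / real pp))) *v (expJ (\<tau> / ((\<omega> - 1) / real pp)) *v a j)"])
        (rule allI, rule allI, rule refl)+
  qed
qed

end
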